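(* For every integer $d\ge1$ there is a constant $c(d)>0$ depending only on $d$ such that for every integer $t\ge2$, $VC(\mathcal{G}(t))\le c(d)\cdot t\ln t$.
   Context: $\mathcal{T}(t)$ is the set of partitions of $[0,1]^d$ with exactly $t$ cells that arise as the leaves of a Mondrian tree, i.e. of a binary tree obtained by starting from $[0,1]^d$ and repeatedly splitting a leaf cell $\mathcal{C}$ along an axis-aligned hyperplane into $\{x\in\mathcal{C}:x_J\le s\}$ and $\{x\in\mathcal{C}:x_J>s\}$. $\mathcal{G}(t)=\{\sum_{j=1}^t c_j\mathbb{I}(x\in\mathcal{C}_j):c_j\in\mathbb{R},\ \{\mathcal{C}_1,\dots,\mathcal{C}_t\}\in\mathcal{T}(t)\}$. For a real function $f$ on $\mathcal{X}$, its subgraph is $\{(x,y)\in\mathcal{X}\times\mathbb{R}:f(x)>y\}$; a collection of sets shatters a finite set of points if every subset of it can be written as its intersection with a member of the collection; the VC dimension $VC(\mathcal{F})$ of a function class $\mathcal{F}$ is the largest size of a set of points in $\mathcal{X}\times\mathbb{R}$ shattered by the subgraphs of the functions in $\mathcal{F}$. *)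

theory Defs
  imports "HOL-Analysis.Analysis"
begin

text \<open>Points of [0,1]^d are represented as functions nat => real whose
coordinates i < d lie in [0,1] and whose coordinates i >= d are 0.\<close>
definition unit_cube :: "nat \<Rightarrow> (nat \<Rightarrow> real) set" where
  "unit_cube d = {x. (\<forall>i<d. 0 \<le> x i \<and> x i \<le> 1) \<and> (\<forall>i\<ge>d. x i = 0)}"

text \<open>Mondrian partitions: leaves of binary trees obtained from [0,1]^d by
repeatedly splitting a leaf cell C along an axis-aligned hyperplane x_J = s
into {x in C. x_J <= s} and {x in C. x_J > s} (both pieces nonempty, so
that the result is again a partition into cells).\<close>
inductive_set mondrian :: "nat \<Rightarrow> (nat \<Rightarrow> real) set set set" for d where
  root: "{unit_cube d} \<in> mondrian d"
| split: "\<lbrakk> P \<in> mondrian d; C \<in> P; J < d;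
            {x\<in>C. x J \<le> s} \<noteq> {}; {x\<in>C. x J > s} \<noteq> {} \<rbrakk>
          \<Longrightarrow> (P - {C}) \<union> {{x\<in>C. x J \<le> s}, {x\<in>C. x J > s}} \<in> mondrian d"

definition mondrian_t :: "nat \<Rightarrow> nat \<Rightarrow> (nat \<Rightarrow> real) set set set" where
  "mondrian_t d t = {P \<in> mondrian d. card P = t}"

definition G_class :: "nat \<Rightarrow> nat \<Rightarrow> ((nat \<Rightarrow> real) \<Rightarrow> real) set" where
  "G_class d t = {f. \<exists>P \<in> mondrian_t d t. \<exists>c :: (nat \<Rightarrow> real) set \<Rightarrow> real.
       f = (\<lambda>x. \<Sum>C\<in>P. c C * indicator C x)}"

definition subgraph :: "'a set \<Rightarrow> ('a \<Rightarrow> real) \<Rightarrow> ('a \<times> real) set" where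
  "subgraph X f = {(x, y). x \<in> X \<and> f x > y}"

definition shatters :: "'a set \<Rightarrow> ('a \<Rightarrow> real) set \<Rightarrow> ('a \<times> real) set \<Rightarrow> bool" where
  "shatters X F S \<longleftrightarrow> (\<forall>T \<subseteq> S. \<exists>f \<in> F. T = S \<inter> subgraph X f)"

definition vc_dim :: "'a set \<Rightarrow> ('a \<Rightarrow> real) set \<Rightarrow> ereal" where
  "vc_dim X F = Sup {ereal (real (card S)) | S. finite S \<and> S \<subseteq> X \<times> UNIV \<and> shatters X F S}"

end

theory Submission
  imports Defs
begin

definition mbox :: "nat \<Rightarrow> (nat \<Rightarrow> real) \<Rightarrow> (nat \<Rightarrow> real) \<Rightarrow> (nat \<Rightarrow> real) set" where
  "mbox d a b = {x\<in>unit_cube d. \<forall>j<d. a j < x j \<and> x j \<le> b j}"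

lemma mbox_le: "J < d \<Longrightarrow> {x\<in>mbox d a b. x J \<le> s} = mbox d a (b(J := min (b J) s))"
proof (rule set_eqI)
  fix x assume J: "J < d"
  show "x \<in> {x\<in>mbox d a b. x J \<le> s} \<longleftrightarrow> x \<in> mbox d a (b(J := min (b J) s))"
  proof
    assume "x \<in> {x\<in>mbox d a b. x J \<le> s}"
    then show "x \<in> mbox d a (b(J := min (b J) s))" unfolding mbox_def by simp
  next
    assume h: "x \<in> mbox d a (b(J := min (b J) s))"
    then have "x J \<le> s" using J unfolding mbox_def by (metis (mono_tags, lifting) fun_upd_same mem_Collect_eq min.bounded_iff)
    moreover have "x j \<le> b j" if "j < d" for j
      using h that unfolding mbox_def by (cases "j = J") auto
    ultimately show "x \<in> {x\<in>mbox d a b. x J \<le> s}" using h unfolding mbox_def by auto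
  qed
qed

lemma mbox_gt: "J < d \<Longrightarrow> {x\<in>mbox d a b. x J > s} = mbox d (a(J := max (a J) s)) b"
proof (rule set_eqI)
  fix x assume J: "J < d"
  show "x \<in> {x\<in>mbox d a b. x J > s} \<longleftrightarrow> x \<in> mbox d (a(J := max (a J) s)) b"
  proof
    assume "x \<in> {x\<in>mbox d a b. x J > s}"
    then show "x \<in> mbox d (a(J := max (a J) s)) b" unfolding mbox_def by simp
  next
    assume h: "x \<in> mbox d (a(J := max (a J) s)) b"
    then have "x J > s" using J unfolding mbox_def by (metis (mono_tags, lifting) fun_upd_same mem_Collect_eq max.strict_boundedE)
    moreover have "a j < x j" if "j < d" for j
      using h that unfolding mbox_def by (cases "j = J") auto
    ultimately show "x \<in> {x\<in>mbox d a b. x J > s}" using h unfolding mbox_def by auto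
  qed
qed
lemma mondrian_inv:
  assumes "P \<in> mondrian d"
  shows "(\<forall>x\<in>unit_cube d. \<exists>C\<in>P. x\<in>C) \<and> (\<forall>C\<in>P. \<forall>D\<in>P. C \<noteq> D \<longrightarrow> C \<inter> D = {})
         \<and> (\<forall>C\<in>P. \<exists>a b. C = mbox d a b)"
  using assms
proof induction
  case root
  have "unit_cube d = mbox d (\<lambda>_. -1) (\<lambda>_. 1)"
    by (force simp: mbox_def unit_cube_def)
  then show ?case by auto
next
  case (split P C J s)
  have IH1: "\<forall>x\<in>unit_cube d. \<exists>C\<in>P. x\<in>C" using split.IH by (rule conjunct1)
  have IH2: "\<forall>C\<in>P. \<forall>D\<in>P. C \<noteq> D \<longrightarrow> C \<inter> D = {}" using split.IH by blast
  have IH3: "\<forall>C\<in>P. \<exists>a b. C = mbox d a b" using split.IH by blast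
  obtain a b where ab: "C = mbox d a b" using IH3 split.hyps(2) by blast
  define C1 where "C1 = {x\<in>C. x J \<le> s}"
  define C2 where "C2 = {x\<in>C. x J > s}"
  have e1: "C1 = mbox d a (b(J := min (b J) s))"
    unfolding C1_def ab using mbox_le[OF split.hyps(3)] .
  have e2: "C2 = mbox d (a(J := max (a J) s)) b"
    unfolding C2_def ab using mbox_gt[OF split.hyps(3)] .
  have sub: "C1 \<subseteq> C" "C2 \<subseteq> C" "C1 \<inter> C2 = {}" unfolding C1_def C2_def by auto
  have dis: "\<forall>D\<in>P - {C}. D \<inter> C = {}" using IH2 split.hyps(2) by blast
  have cov: "\<forall>x\<in>unit_cube d. \<exists>D\<in>(P - {C}) \<union> {C1, C2}. x \<in> D"
  proof
    fix x assume "x \<in> unit_cube d"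
    then obtain D where "D \<in> P" "x \<in> D" using IH1 by blast
    then show "\<exists>D\<in>(P - {C}) \<union> {C1, C2}. x \<in> D"
    proof (cases "D = C")
      case True
      then have "x \<in> C1 \<or> x \<in> C2" using \<open>x \<in> D\<close> unfolding C1_def C2_def by auto
      then show ?thesis by blast
    next
      case False
      then show ?thesis using \<open>D \<in> P\<close> \<open>x \<in> D\<close> by blast
    qed
  qed
  have dj: "\<forall>X\<in>(P - {C}) \<union> {C1, C2}. \<forall>Y\<in>(P - {C}) \<union> {C1, C2}. X \<noteq> Y \<longrightarrow> X \<inter> Y = {}"
  proof (intro ballI impI)
    fix X Y assume X: "X \<in> (P - {C}) \<union> {C1, C2}" and Y: "Y \<in> (P - {C}) \<union> {C1, C2}" and XY: "X \<noteq> Y"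
    show "X \<inter> Y = {}"
    proof (cases "X \<in> P - {C}")
      case Xi: True
      show ?thesis
      proof (cases "Y \<in> P - {C}")
        case True then show ?thesis using Xi XY IH2 by blast
      next
        case False then have "Y \<subseteq> C" using Y sub by blast
        then show ?thesis using Xi dis by blast
      qed
    next
      case Xo: False
      then have XC: "X \<subseteq> C" "X = C1 \<or> X = C2" using X sub by blast+
      show ?thesis
      proof (cases "Y \<in> P - {C}")
        case True then show ?thesis using XC dis by blast
      next
        case False then have "Y = C1 \<or> Y = C2" using Y by blast
        then show ?thesis using XC XY sub by blast
      qed
    qed
  qed
  have bx: "\<forall>X\<in>(P - {C}) \<union> {C1, C2}. \<exists>a b. X = mbox d a b"
    using IH3 e1 e2 by blast
  have all: "(\<forall>x\<in>unit_cube d. \<exists>D\<in>(P - {C}) \<union> {C1, C2}. x \<in> D)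
     \<and> (\<forall>X\<in>(P - {C}) \<union> {C1, C2}. \<forall>Y\<in>(P - {C}) \<union> {C1, C2}. X \<noteq> Y \<longrightarrow> X \<inter> Y = {})
     \<and> (\<forall>X\<in>(P - {C}) \<union> {C1, C2}. \<exists>a b. X = mbox d a b)"
    using cov dj bx by blast
  then show ?case unfolding C1_def C2_def .
qed

lemma sum_single_cell:
  assumes "finite P" "C0 \<in> P" "x \<in> C0" "\<forall>D\<in>P. D \<noteq> C0 \<longrightarrow> x \<notin> D"
  shows "(\<Sum>C\<in>P. c C * indicator C x) = (c C0 :: real)"
proof -
  have "(\<Sum>C\<in>P. c C * indicator C x) = c C0 * indicator C0 x + (\<Sum>C\<in>P - {C0}. c C * indicator C x)"
    using sum.remove[OF assms(1) assms(2), of "\<lambda>C. c C * indicator C x"] .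
  also have "(\<Sum>C\<in>P - {C0}. c C * indicator C x) = 0"
  proof (rule sum.neutral, rule ballI)
    fix C assume "C \<in> P - {C0}"
    then have "x \<notin> C" using assms(4) by blast
    then show "c C * indicator C x = 0" by simp
  qed
  finally show ?thesis using assms(3) by simp
qed

lemma chain_card:
  assumes fin: "finite S" and FS: "F \<subseteq> Pow S" and ch: "\<forall>A\<in>F. \<forall>B\<in>F. A \<subseteq> B \<or> B \<subseteq> A"
  shows "card F \<le> card S + 1"
proof -
  have "inj_on card F"
  proof (rule inj_onI)
    fix A B assume A: "A \<in> F" and B: "B \<in> F" and c: "card A = card B"
    have AS: "A \<subseteq> S" using A FS by blast
    have BS: "B \<subseteq> S" using B FS by blast
    have fA: "finite A" using finite_subset[OF AS fin] .
    have fB: "finite B" using finite_subset[OF BS fin] .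
    have "A \<subseteq> B \<or> B \<subseteq> A" using ch A B by blast
    then show "A = B"
    proof
      assume "A \<subseteq> B" then show "A = B" using card_subset_eq[OF fB _ c] by blast
    next
      assume "B \<subseteq> A" then show "A = B" using card_subset_eq[OF fA _ c[symmetric]] by blast
    qed
  qed
  moreover have "card ` F \<subseteq> {0..card S}"
  proof
    fix k assume "k \<in> card ` F"
    then obtain A where A: "A \<in> F" "k = card A" by blast
    have "A \<subseteq> S" using A FS by blast
    then have "card A \<le> card S" using card_mono[OF fin] by blast
    then show "k \<in> {0..card S}" using A by simp
  qed
  ultimately have "card F \<le> card {0..card S}" by (rule card_inj_on_le) simp
  then show ?thesis by simp
qed

lemma chain_fam:
  assumes "\<And>c1 c2. G c1 \<subseteq> G c2 \<or> G c2 \<subseteq> G c1"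
  shows "\<forall>A\<in>{G c | c::real. True}. \<forall>B\<in>{G c|c. True}. A \<subseteq> B \<or> B \<subseteq> A"
proof (intro ballI)
  fix A B assume "A \<in> {G c | c::real. True}" "B \<in> {G c | c::real. True}"
  then obtain c1 c2 where "A = G c1" "B = G c2" by blast
  then show "A \<subseteq> B \<or> B \<subseteq> A" using assms by simp
qed

lemma shatter_bound:
  assumes fin: "finite S" and sub: "S \<subseteq> unit_cube d \<times> UNIV"
    and sh: "shatters (unit_cube d) (G_class d t) S" and t1: "t \<ge> 1"
  shows "2 ^ card S \<le> (card S + 1) ^ ((2*d+1)*t)"
proof -
  define n where "n = card S"
  define Thr where "Thr = {{p\<in>S. snd p < c} | c. True}"
  define Low where "Low = (\<lambda>j. {{p\<in>S. a < fst p j} | a. True})"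
  define Up where "Up = (\<lambda>j. {{p\<in>S. fst p j \<le> b} | b. True})"
  define \<Phi> where "\<Phi> = (\<lambda>(h :: nat \<Rightarrow> _ \<times> _, B). S \<inter> (\<Inter>j\<in>{..<d}. fst (h j) \<inter> snd (h j)) \<inter> B)"
  define Dom where "Dom = (PiE {..<d} (\<lambda>j. Low j \<times> Up j)) \<times> Thr"
  define W where "W = \<Phi> ` Dom"
  have thr_fin: "finite Thr" "card Thr \<le> n + 1"
  proof -
    have "Thr \<subseteq> Pow S" unfolding Thr_def by auto
    moreover have "\<forall>A\<in>Thr. \<forall>B\<in>Thr. A \<subseteq> B \<or> B \<subseteq> A"
      unfolding Thr_def
    proof (rule chain_fam)
      fix c1 c2 :: real
      show "{p\<in>S. snd p < c1} \<subseteq> {p\<in>S. snd p < c2} \<or> {p\<in>S. snd p < c2} \<subseteq> {p\<in>S. snd p < c1}"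
        by (cases "c1 \<le> c2") auto
    qed
    ultimately show "finite Thr" "card Thr \<le> n + 1"
      using chain_card[OF fin] fin unfolding n_def by (auto intro: finite_subset)
  qed
  have low_fin: "finite (Low j)" "card (Low j) \<le> n + 1" for j
  proof -
    have "Low j \<subseteq> Pow S" unfolding Low_def by auto
    moreover have "\<forall>A\<in>Low j. \<forall>B\<in>Low j. A \<subseteq> B \<or> B \<subseteq> A"
      unfolding Low_def
    proof (rule chain_fam)
      fix c1 c2 :: real
      show "{p\<in>S. c1 < fst p j} \<subseteq> {p\<in>S. c2 < fst p j} \<or> {p\<in>S. c2 < fst p j} \<subseteq> {p\<in>S. c1 < fst p j}"
        by (cases "c1 \<le> c2") auto
    qed
    ultimately show "finite (Low j)" "card (Low j) \<le> n + 1"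
      using chain_card[OF fin] fin unfolding n_def by (auto intro: finite_subset)
  qed
  have up_fin: "finite (Up j)" "card (Up j) \<le> n + 1" for j
  proof -
    have "Up j \<subseteq> Pow S" unfolding Up_def by auto
    moreover have "\<forall>A\<in>Up j. \<forall>B\<in>Up j. A \<subseteq> B \<or> B \<subseteq> A"
      unfolding Up_def
    proof (rule chain_fam)
      fix c1 c2 :: real
      show "{p\<in>S. fst p j \<le> c1} \<subseteq> {p\<in>S. fst p j \<le> c2} \<or> {p\<in>S. fst p j \<le> c2} \<subseteq> {p\<in>S. fst p j \<le> c1}"
        by (cases "c1 \<le> c2") auto
    qed
    ultimately show "finite (Up j)" "card (Up j) \<le> n + 1"
      using chain_card[OF fin] fin unfolding n_def by (auto intro: finite_subset)
  qed
  have cardPi: "card (PiE {..<d} (\<lambda>j. Low j \<times> Up j)) \<le> ((n+1)^2) ^ d"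
  proof -
    have "card (PiE {..<d} (\<lambda>j. Low j \<times> Up j)) = (\<Prod>j\<in>{..<d}. card (Low j \<times> Up j))"
      by (simp add: card_PiE)
    also have "\<dots> \<le> ((n+1)^2) ^ d"
    proof (rule prod_le_power)
      fix j assume "j \<in> {..<d}"
      have "card (Low j \<times> Up j) = card (Low j) * card (Up j)" by (simp add: card_cartesian_product)
      also have "\<dots> \<le> (n+1) * (n+1)" using low_fin up_fin by (intro mult_le_mono) auto
      finally show "0 \<le> card (Low j \<times> Up j) \<and> card (Low j \<times> Up j) \<le> (n+1)^2"
        by (simp add: power2_eq_square)
    qed auto
    finally show ?thesis .
  qed
  have finDom: "finite Dom" unfolding Dom_def
    using low_fin up_fin thr_fin by (intro finite_cartesian_product finite_PiE) auto
  have cardW: "card W \<le> (n+1)^(2*d+1)"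
  proof -
    have "card W \<le> card Dom" unfolding W_def using finDom by (rule card_image_le)
    also have "\<dots> = card (PiE {..<d} (\<lambda>j. Low j \<times> Up j)) * card Thr"
      unfolding Dom_def by (simp add: card_cartesian_product)
    also have "\<dots> \<le> ((n+1)^2) ^ d * (n+1)" using cardPi thr_fin by (intro mult_le_mono) auto
    also have "\<dots> = (n+1)^(2*d+1)" by (simp add: power_mult power_add)
    finally show ?thesis .
  qed
  have finW: "finite W" unfolding W_def using finDom by simp
  have cover: "Pow S \<subseteq> (\<lambda>g. \<Union>i\<in>{..<t}. g i) ` (PiE {..<t} (\<lambda>_. W))"
  proof
    fix T assume "T \<in> Pow S"
    then obtain f where fG: "f \<in> G_class d t" and Tf: "T = S \<inter> subgraph (unit_cube d) f"
      using sh unfolding shatters_def by blast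
    obtain P c where P: "P \<in> mondrian d" "card P = t" and f: "f = (\<lambda>x. \<Sum>C\<in>P. c C * indicator C x)"
      using fG unfolding G_class_def mondrian_t_def by blast
    have finP: "finite P" using P t1 by (metis card.infinite not_one_le_zero)
    note inv = mondrian_inv[OF P(1)]
    obtain e where e: "bij_betw e {..<t} P"
      using ex_bij_betw_nat_finite[OF finP] P(2) by (auto simp: atLeast0LessThan)
    define g where "g = restrict (\<lambda>i. {p\<in>S. fst p \<in> e i \<and> snd p < c (e i)}) {..<t}"
    have gW: "g \<in> PiE {..<t} (\<lambda>_. W)"
    proof -
      have "{p\<in>S. fst p \<in> e i \<and> snd p < c (e i)} \<in> W" if i: "i < t" for i
      proof -
        have eiP: "e i \<in> P" using bij_betwE[OF e] i by blast
        have boxes: "\<forall>C\<in>P. \<exists>a b. C = mbox d a b" using conjunct2[OF conjunct2[OF inv]] .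
        obtain a b where ab: "e i = mbox d a b" using bspec[OF boxes eiP] by blast
        define h where "h = restrict (\<lambda>j. ({p\<in>S. a j < fst p j}, {p\<in>S. fst p j \<le> b j})) {..<d}"
        define B where "B = {p\<in>S. snd p < c (e i)}"
        have hP: "h \<in> PiE {..<d} (\<lambda>j. Low j \<times> Up j)"
          unfolding h_def
        proof (rule restrict_PiE_iff[THEN iffD2], intro ballI)
          fix j assume "j \<in> {..<d}"
          show "({p\<in>S. a j < fst p j}, {p\<in>S. fst p j \<le> b j}) \<in> Low j \<times> Up j"
            unfolding Low_def Up_def by blast
        qed
        have BT: "B \<in> Thr" unfolding B_def Thr_def by blast
        have "(h, B) \<in> Dom" unfolding Dom_def using hP BT by blast
        moreover have "\<Phi> (h, B) = S \<inter> (\<Inter>j\<in>{..<d}. fst (h j) \<inter> snd (h j)) \<inter> B"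
          unfolding \<Phi>_def by simp
        moreover have "S \<inter> (\<Inter>j\<in>{..<d}. fst (h j) \<inter> snd (h j)) \<inter> B
            = {p\<in>S. (\<forall>j<d. a j < fst p j \<and> fst p j \<le> b j) \<and> p \<in> B}"
          unfolding h_def by auto
        moreover have "{p\<in>S. (\<forall>j<d. a j < fst p j \<and> fst p j \<le> b j) \<and> p \<in> B}
            = {p\<in>S. fst p \<in> e i \<and> snd p < c (e i)}"
          using sub unfolding ab mbox_def B_def by auto
        ultimately have "{p\<in>S. fst p \<in> e i \<and> snd p < c (e i)} = \<Phi> (h, B)" by simp
        then show ?thesis unfolding W_def using \<open>(h, B) \<in> Dom\<close> by (rule image_eqI)
      qed
      then show ?thesis unfolding g_def by (intro restrict_PiE_iff[THEN iffD2]) auto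
    qed
    have covP: "\<forall>x\<in>unit_cube d. \<exists>C\<in>P. x\<in>C" using conjunct1[OF inv] .
    have disP: "\<forall>C\<in>P. \<forall>D\<in>P. C \<noteq> D \<longrightarrow> C \<inter> D = {}" using conjunct1[OF conjunct2[OF inv]] .
    have gi: "g i = {p\<in>S. fst p \<in> e i \<and> snd p < c (e i)}" if "i < t" for i
      unfolding g_def using that by simp
    have UNg: "p \<in> (\<Union>i\<in>{..<t}. g i) \<longleftrightarrow> p \<in> S \<and> (\<exists>i<t. fst p \<in> e i \<and> snd p < c (e i))" for p
    proof
      assume "p \<in> (\<Union>i\<in>{..<t}. g i)"
      then obtain i where "i < t" "p \<in> g i" by blast
      then show "p \<in> S \<and> (\<exists>i<t. fst p \<in> e i \<and> snd p < c (e i))" using gi[of i] by blast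
    next
      assume "p \<in> S \<and> (\<exists>i<t. fst p \<in> e i \<and> snd p < c (e i))"
      then obtain i where "i < t" "p \<in> S" "fst p \<in> e i" "snd p < c (e i)" by blast
      then have "p \<in> g i" using gi[of i] by blast
      then show "p \<in> (\<Union>i\<in>{..<t}. g i)" using \<open>i < t\<close> by blast
    qed
    have Tmem: "p \<in> T \<longleftrightarrow> p \<in> S \<and> f (fst p) > snd p" for p
    proof -
      obtain x y where p: "p = (x, y)" by (cases p)
      have "p \<in> T \<longleftrightarrow> p \<in> S \<and> (x, y) \<in> subgraph (unit_cube d) f" using Tf p by blast
      also have "\<dots> \<longleftrightarrow> p \<in> S \<and> x \<in> unit_cube d \<and> f x > y" by (simp add: subgraph_def)
      also have "\<dots> \<longleftrightarrow> p \<in> S \<and> f x > y" using sub p by blast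
      finally show ?thesis using p by simp
    qed
    have "T = (\<Union>i\<in>{..<t}. g i)"
    proof (rule set_eqI)
      fix p
      show "p \<in> T \<longleftrightarrow> p \<in> (\<Union>i\<in>{..<t}. g i)"
      proof (cases "p \<in> S")
        case False then show ?thesis using Tmem UNg by blast
      next
        case True
        then have xc: "fst p \<in> unit_cube d" using sub mem_Times_iff by blast
        then obtain C0 where C0: "C0 \<in> P" "fst p \<in> C0" using covP by blast
        have uniq: "\<forall>D\<in>P. D \<noteq> C0 \<longrightarrow> fst p \<notin> D" using disP C0 by blast
        have fx: "f (fst p) = c C0" unfolding f using sum_single_cell[OF finP C0 uniq] .
        have "C0 \<in> e ` {..<t}" using e C0 unfolding bij_betw_def by simp
        then obtain i0 where i0: "i0 < t" "e i0 = C0" by blast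
        have "p \<in> T \<longleftrightarrow> snd p < c C0" using Tmem True fx by simp
        also have "\<dots> \<longleftrightarrow> (\<exists>i<t. fst p \<in> e i \<and> snd p < c (e i))"
        proof
          assume "snd p < c C0" then show "\<exists>i<t. fst p \<in> e i \<and> snd p < c (e i)"
            using i0 C0 by blast
        next
          assume "\<exists>i<t. fst p \<in> e i \<and> snd p < c (e i)"
          then obtain i where i: "i < t" "fst p \<in> e i" "snd p < c (e i)" by blast
          have "e i \<in> P" using bij_betwE[OF e] i by blast
          then have "e i = C0" using uniq i by blast
          then show "snd p < c C0" using i by simp
        qed
        also have "\<dots> \<longleftrightarrow> p \<in> (\<Union>i\<in>{..<t}. g i)" using UNg True by blast
        finally show ?thesis .
      qed
    qed
    then show "T \<in> (\<lambda>g. \<Union>i\<in>{..<t}. g i) ` (PiE {..<t} (\<lambda>_. W))" using gW by blast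
  qed
  have "2 ^ n = card (Pow S)" using fin by (simp add: card_Pow n_def)
  also have "\<dots> \<le> card ((\<lambda>g. \<Union>i\<in>{..<t}. g i) ` (PiE {..<t} (\<lambda>_. W)))"
    using cover finW by (intro card_mono) (auto intro: finite_PiE)
  also have "\<dots> \<le> card (PiE {..<t} (\<lambda>_. W))" using finW by (intro card_image_le finite_PiE) auto
  also have "\<dots> = card W ^ t" by (simp add: card_PiE)
  also have "\<dots> \<le> ((n+1)^(2*d+1)) ^ t" using cardW by (rule power_mono) simp
  also have "\<dots> = (n+1)^((2*d+1)*t)" by (rule power_mult[symmetric])
  finally show ?thesis unfolding n_def .
qed

lemma growth_bound:
  fixes k :: nat assumes k1: "k \<ge> 1"
  shows "\<exists>c>0. \<forall>N t::nat. t \<ge> 2 \<longrightarrow> 2^N \<le> (N+1)^(k*t) \<longrightarrow> real N \<le> c * real t * ln (real t)"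
proof -
  define L where "L = ln (2::real)"
  have L0: "0 < L" "L < 1" unfolding L_def using ln_2_less_1 by auto
  define A where "A = 4 * real k / L"
  have A1: "A \<ge> 1" unfolding A_def using L0 k1 by (simp add: field_simps)
  have lnA: "ln A \<ge> 0" using A1 by simp
  define X where "X = real k * (ln A / L) + real k + 1"
  define c where "c = 4 / (3 * L) * X"
  have X0: "X > 0" unfolding X_def using lnA L0 by (simp add: add_nonneg_pos)
  have c0: "c > 0" unfolding c_def using X0 L0 by simp
  have main: "real N \<le> c * real t * ln (real t)" if t2: "t \<ge> 2" and hyp: "2^N \<le> (N+1)^(k*t)" for N t :: nat
  proof -
    define m where "m = real N + 1"
    have m1: "m \<ge> 1" unfolding m_def by simp
    have t0: "real t \<ge> 2" using t2 by simp
    have lnt: "ln (real t) \<ge> L" unfolding L_def using t0 by simp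
    have "real (2^N) \<le> real ((N+1)^(k*t))" using hyp by linarith
    then have "(2::real)^N \<le> m^(k*t)" unfolding m_def by (simp add: add.commute)
    then have "ln ((2::real)^N) \<le> ln (m^(k*t))" using m1 by simp
    then have h1: "real N * L \<le> real (k*t) * ln m" unfolding L_def using m1 by (simp add: ln_realpow)
    have At: "A * real t > 0" using A1 t0 by simp
    have "ln (m / (A * real t)) \<le> m / (A * real t) - 1" using m1 At by (intro ln_le_minus_one) simp
    moreover have "ln (m / (A * real t)) = ln m - ln A - ln (real t)"
      using m1 A1 t0 by (simp add: ln_div ln_mult)
    ultimately have h2: "ln m \<le> ln A + ln (real t) + m / (A * real t)" by simp
    have kt0: "real (k*t) \<ge> 0" by simp
    have "real (k*t) * ln m \<le> real (k*t) * (ln A + ln (real t) + m / (A * real t))"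
      using h2 kt0 by (rule mult_left_mono)
    also have "real (k*t) * (m / (A * real t)) = m * L / 4"
      unfolding A_def using k1 t0 L0 by (simp add: field_simps)
    then have "real (k*t) * (ln A + ln (real t) + m / (A * real t))
        = real k * real t * ln A + real k * real t * ln (real t) + m * L / 4"
      by (simp add: algebra_simps)
    finally have h3: "real N * L \<le> real k * real t * ln A + real k * real t * ln (real t) + m * L / 4"
      using h1 by linarith
    have tl0: "real t * ln (real t) \<ge> 0" using t0 by simp
    have h4: "ln A \<le> ln A / L * ln (real t)"
    proof -
      have "ln A / L * L \<le> ln A / L * ln (real t)" using lnt lnA L0 by (intro mult_left_mono) auto
      then show ?thesis using L0 by simp
    qed
    have h5: "real k * real t * ln A \<le> real k * (ln A / L) * (real t * ln (real t))"
      using mult_left_mono[OF h4, of "real k * real t"] by (simp add: algebra_simps)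
    have h6: "L / 4 \<le> real t * ln (real t)"
    proof -
      have "L \<le> 1 * ln (real t)" using lnt by simp
      also have "\<dots> \<le> real t * ln (real t)" using t0 lnt L0 by (intro mult_right_mono) auto
      finally show ?thesis using L0 by simp
    qed
    define P where "P = real t * ln (real t)"
    define Q where "Q = real k * real t * ln A"
    have e1: "m * L / 4 = real N * L / 4 + L / 4" unfolding m_def by (simp add: algebra_simps)
    have e2: "real k * real t * ln (real t) = real k * P" unfolding P_def by (simp add: mult.assoc)
    have h3': "real N * L \<le> Q + real k * P + real N * L / 4 + L / 4"
      using h3 e1 e2 unfolding Q_def by linarith
    have h5': "Q \<le> real k * (ln A / L) * P" using h5 unfolding Q_def P_def .
    have h6': "L / 4 \<le> P" using h6 unfolding P_def .
    have "3/4 * (real N * L) \<le> real k * (ln A / L) * P + real k * P + P"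
      using h3' h5' h6' by linarith
    also have "\<dots> = X * P" unfolding X_def by (simp add: algebra_simps)
    finally have "3/4 * L * real N \<le> X * (real t * ln (real t))" unfolding P_def by (simp add: algebra_simps)
    then have "real N \<le> 4 / (3 * L) * (X * (real t * ln (real t)))"
      using L0 by (simp add: field_simps)
    then show ?thesis unfolding c_def by (simp add: algebra_simps)
  qed
  show ?thesis using c0 main by blast
qed


theorem lemmaA6:
  fixes d :: nat
  assumes "d \<ge> 1"
  shows "\<exists>c > (0::real). \<forall>t::nat. t \<ge> 2 \<longrightarrow>
           vc_dim (unit_cube d) (G_class d t) \<le> ereal (c * real t * ln (real t))"
proof -
  obtain c where c0: "c > 0" and hc: "\<forall>N t::nat. t \<ge> 2 \<longrightarrow> 2^N \<le> (N+1)^((2*d+1)*t) \<longrightarrow> real N \<le> c * real t * ln (real t)"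
    using growth_bound[of "2*d+1"] by auto
  have "vc_dim (unit_cube d) (G_class d t) \<le> ereal (c * real t * ln (real t))" if t2: "t \<ge> 2" for t
    unfolding vc_dim_def
  proof (rule Sup_least, clarify)
    fix S assume S: "finite S" "S \<subseteq> unit_cube d \<times> (UNIV :: real set)" "shatters (unit_cube d) (G_class d t) S"
    have "2 ^ card S \<le> (card S + 1) ^ ((2*d+1)*t)" using shatter_bound[OF S] t2 by simp
    then have "real (card S) \<le> c * real t * ln (real t)" using hc t2 by blast
    then show "ereal (real (card S)) \<le> ereal (c * real t * ln (real t))" by simp
  qed
  then show ?thesis using c0 by blast
qed

end
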